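(* The finite derivative test $\mathcal D$ is reasonable.
   Context: Let $\Omega=\{0,1\}$, $\Omega^\infty$ the set of infinite sequences $\omega=(\omega_1,\omega_2,\dots)$, and $\omega^t=(\omega_1,\dots,\omega_t)$ (also used for the cylinder set of all sequences with this prefix; $\omega^0=\emptyset$). $\mathcal G_t$ is the $\sigma$-algebra generated by the length-$t$ cylinders and $\mathcal G_\infty$ the $\sigma$-algebra generated by all cylinders. $\Delta(\Omega)$ is the set of probability distributions on $\Omega$; for $p\in\Delta(\Omega)$ and $x\in\Omega$, $p[x]$ is the probability of $x$. A forecasting strategy is a map $f:\bigcup_{t\ge0}(\Omega\times\Delta(\Omega)\times\Delta(\Omega))^t\to\Delta(\Omega)$; $F$ is the set of all forecasting strategies. Given an ordered pair $\vec f=(f,g)\in F\times F$ and $\omega\in\Omega^\infty$, the play path $(\omega,\vec f)$ is defined recursively: $(\omega,\vec f)^0=\emptyset$ and its $t$-th entry is $(\omega_t,f((\omega,\vec f)^{t-1}),g((\omega,\vec f)^{t-1}))$, where $(\omega,\vec f)^t$ is the prefix of length $t$. The pair $\vec f$ induces two probability measures on $(\Omega^\infty,\mathcal G_\infty)$, again denoted $f$ and $g$ (they depend on the pair), determined by $f(\omega^t)=\prod_{n=1}^t f((\omega,\vec f)^{n-1})[\omega_n]$ and $g(\omega^t)=\prod_{n=1}^t g((\omega,\vec f)^{n-1})[\omega_n]$. A (cardinal comparison) test is a sequence $T=(T_t)_{t>0}$ of $\mathcal G_t$-measurable functions $T_t:(\Omega\times\Delta(\Omega)\times\Delta(\Omega))^\infty\to[0,1]$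 (depending only on the first $t$ entries); write $T_t(\omega,\vec f)=T_t((\omega,\vec f))$ and $T(\omega,\vec f)=\lim_t T_t(\omega,\vec f)$ whenever the limit exists. For $\epsilon\in(0,1)$ let $L^{\vec f}_{T,\epsilon}=\{\omega:T(\omega,\vec f)\text{ exists and }>\epsilon\}$ and $R^{\vec f}_{T,\epsilon}=\{\omega:T(\omega,\vec f)\text{ exists and }<\epsilon\}$. $T$ is reasonable if for all $\vec f=(f,g)\in F\times F$ and every measurable $A\subseteq\Omega^\infty$: for $\epsilon\in(0,\frac12)$, if $g(A)>0$ and $f(A)<\frac{\epsilon}{1-\epsilon}g(A)$ then $g(A\cap R^{\vec f}_{T,\epsilon})>0$; and for $\epsilon\in(\frac12,1)$, if $f(A)>0$ and $g(A)<\frac{1-\epsilon}{\epsilon}f(A)$ then $f(A\cap L^{\vec f}_{T,\epsilon})>0$ (with $f,g$ the measures induced by $\vec f$). The finite derivative test $\mathcal D$ is defined for $t\ge0$ by $\mathcal D_{t+1}(\omega,\vec f)=\frac{f(\omega^t)}{f(\omega^t)+g(\omega^t)}$ if $f(\omega^t)>0$ or $g(\omega^t)>0$, and $\frac12$ otherwise. *)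

theory Defs
  imports "HOL-Probability.Probability"
begin

text \<open>Outcomes Omega = {0,1} are rendered as bool (True = 1); Delta(Omega) as bool pmf.
  An entry of a play path is (omega_t, forecast of f, forecast of g).
  Infinite sequences are functions nat => bool, omega_1 being omega 0.\<close>

type_synonym entry = "bool \<times> bool pmf \<times> bool pmf"
type_synonym strat = "entry list \<Rightarrow> bool pmf"

text \<open>play w f g t = the length-t prefix (w, (f,g))^t of the play path.\<close>
fun play :: "(nat \<Rightarrow> bool) \<Rightarrow> strat \<Rightarrow> strat \<Rightarrow> nat \<Rightarrow> entry list" where
  "play w f g 0 = []"
| "play w f g (Suc n) = play w f g n @ [(w n, f (play w f g n), g (play w f g n))]"

definition cyl :: "(nat \<Rightarrow> bool) \<Rightarrow> nat \<Rightarrow> (nat \<Rightarrow> bool) set" where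
  "cyl w t = {v. \<forall>i<t. v i = w i}"

definition Ginf :: "(nat \<Rightarrow> bool) set set" where
  "Ginf = sigma_sets UNIV {cyl w t | w t. True}"

definition induced :: "(nat \<Rightarrow> bool) measure \<Rightarrow> strat \<Rightarrow> strat \<Rightarrow> strat \<Rightarrow> bool" where
  "induced M f g sel \<longleftrightarrow> prob_space M \<and> space M = UNIV \<and> sets M = Ginf \<and>
     (\<forall>w t. measure M (cyl w t) = (\<Prod>n<t. pmf (sel (play w f g n)) (w n)))"

text \<open>A test: T t h is T_t evaluated on a play path whose length-t prefix is h
  (so T_t depends only on the first t entries).\<close>
type_synonym test = "nat \<Rightarrow> entry list \<Rightarrow> real"

definition Lset :: "test \<Rightarrow> strat \<Rightarrow> strat \<Rightarrow> real \<Rightarrow> (nat \<Rightarrow> bool) set" where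
  "Lset T f g e = {w. \<exists>l. (\<lambda>t. T t (play w f g t)) \<longlonglongrightarrow> l \<and> l > e}"

definition Rset :: "test \<Rightarrow> strat \<Rightarrow> strat \<Rightarrow> real \<Rightarrow> (nat \<Rightarrow> bool) set" where
  "Rset T f g e = {w. \<exists>l. (\<lambda>t. T t (play w f g t)) \<longlonglongrightarrow> l \<and> l < e}"

definition reasonable :: "test \<Rightarrow> bool" where
  "reasonable T \<longleftrightarrow>
    (\<forall>f g Mf Mg. induced Mf f g f \<and> induced Mg f g g \<longrightarrow>
      (\<forall>A \<in> Ginf.
        (\<forall>e. 0 < e \<and> e < 1/2 \<and> measure Mg A > 0 \<and> measure Mf A < e / (1 - e) * measure Mg A
              \<longrightarrow> measure Mg (A \<inter> Rset T f g e) > 0) \<and>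
        (\<forall>e. 1/2 < e \<and> e < 1 \<and> measure Mf A > 0 \<and> measure Mg A < (1 - e) / e * measure Mf A
              \<longrightarrow> measure Mf (A \<inter> Lset T f g e) > 0)))"

text \<open>Finite derivative test: D_{t+1} uses the first t entries; f(w^t), g(w^t) are read off
  from the forecasts recorded in the path. D_0 is irrelevant (set to 1/2).\<close>
definition fdt :: test where
  "fdt t h = (case t of 0 \<Rightarrow> 1/2 | Suc s \<Rightarrow>
     (let a = (\<Prod>n<s. pmf (fst (snd (h ! n))) (fst (h ! n)));
          b = (\<Prod>n<s. pmf (snd (snd (h ! n))) (fst (h ! n)))
      in if a > 0 \<or> b > 0 then a / (a + b) else 1/2))"

end

theory Submission
  imports Defs
begin

definition dtm :: "nat \<Rightarrow> (nat \<Rightarrow> bool) set \<Rightarrow> bool" where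
  "dtm t E \<longleftrightarrow> (\<forall>v w. (\<forall>i<t. v i = w i) \<longrightarrow> v \<in> E \<longrightarrow> w \<in> E)"

lemma cyl_mem[simp]: "w \<in> cyl w t"
  by (simp add: cyl_def)

lemma cyl_eq: "(\<forall>i<t. v i = w i) \<Longrightarrow> cyl v t = cyl w t"
  by (auto simp: cyl_def)

lemma cyl_eq2: "v \<in> cyl w t \<Longrightarrow> cyl v t = cyl w t"
  by (auto simp: cyl_def)

lemma det_cyl_subset: assumes "dtm t E" "w \<in> E" shows "cyl w t \<subseteq> E"
proof
  fix x assume "x \<in> cyl w t"
  hence "\<forall>i<t. w i = x i" by (auto simp: cyl_def)
  thus "x \<in> E" using assms unfolding dtm_def by blast
qed

lemma det_union_cyl: "dtm t E \<Longrightarrow> E = \<Union>((\<lambda>v. cyl v t) ` E)"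
  using det_cyl_subset by fastforce

lemma finite_cyls: "finite ((\<lambda>v. cyl v t) ` E)"
proof -
  have "(\<lambda>v. cyl v t) ` E \<subseteq> (\<lambda>S. cyl (\<lambda>i. i \<in> S) t) ` Pow {..<t}"
  proof
    fix C assume "C \<in> (\<lambda>v. cyl v t) ` E"
    then obtain v where C: "C = cyl v t" by auto
    have "cyl v t = cyl (\<lambda>i. i \<in> {i. i < t \<and> v i}) t" by (rule cyl_eq) auto
    then show "C \<in> (\<lambda>S. cyl (\<lambda>i. i \<in> S) t) ` Pow {..<t}" using C by blast
  qed
  then show ?thesis by (rule finite_subset) simp
qed

lemma cyl_disj: "cyl v t \<noteq> cyl w t \<Longrightarrow> cyl v t \<inter> cyl w t = {}"
  by (metis cyl_eq2 disjoint_iff)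

lemma ginf_sa: "sigma_algebra UNIV Ginf"
  unfolding Ginf_def by (rule sigma_algebra_sigma_sets) auto

lemma cyl_in[simp]: "cyl w t \<in> Ginf"
  unfolding Ginf_def by (rule sigma_sets.Basic) blast

lemma det_in: "dtm t E \<Longrightarrow> E \<in> Ginf"
proof -
  assume d: "dtm t E"
  interpret sigma_algebra UNIV Ginf by (rule ginf_sa)
  show ?thesis
    apply (subst det_union_cyl[OF d])
    using finite_cyls by (intro finite_Union) auto
qed

lemma det_mono: assumes "dtm t E" "t \<le> s" shows "dtm s E"
  unfolding dtm_def
proof (intro allI impI)
  fix v w assume "\<forall>i<s. v i = w i" "v \<in> E"
  moreover have "\<forall>i<t. v i = w i" using calculation(1) assms(2) by auto
  ultimately show "w \<in> E" using assms(1) unfolding dtm_def by blast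
qed

lemma det_Int: "dtm t E \<Longrightarrow> dtm t F \<Longrightarrow> dtm t (E \<inter> F)"
  unfolding dtm_def by blast

lemma det_Compl: assumes "dtm t E" shows "dtm t (UNIV - E)"
  unfolding dtm_def
proof (intro allI impI)
  fix v w assume a: "\<forall>i<t. v i = w i" "v \<in> UNIV - E"
  have "\<forall>i<t. w i = v i" using a(1) by simp
  then show "w \<in> UNIV - E" using a(2) assms unfolding dtm_def by blast
qed

lemma det_Collect: "(\<And>v w. (\<forall>i<t. v i = w i) \<Longrightarrow> p v = p w) \<Longrightarrow> dtm t {w. p w}"
  unfolding dtm_def by auto

lemma det_ineq:
  fixes M N :: "(nat \<Rightarrow> bool) measure"
  assumes fM: "finite_measure M" and fN: "finite_measure N"
    and sM: "sets M = Ginf" and sN: "sets N = Ginf" and d: "dtm t E"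
    and h: "\<And>w. w \<in> E \<Longrightarrow> \<beta> * measure N (cyl w t) \<le> \<alpha> * measure M (cyl w t)"
  shows "\<beta> * measure N E \<le> \<alpha> * measure M E"
proof -
  let ?S = "(\<lambda>v. cyl v t) ` E"
  have dj: "disjoint_family_on (\<lambda>C. C) ?S"
    unfolding disjoint_family_on_def using cyl_disj by auto
  have m: "measure K E = (\<Sum>C\<in>?S. measure K C)" if "finite_measure K" "sets K = Ginf" for K
  proof -
    have "measure K (\<Union>C\<in>?S. C) = (\<Sum>C\<in>?S. measure K C)"
      using that finite_cyls dj by (intro finite_measure.finite_measure_finite_Union) auto
    then show ?thesis using det_union_cyl[OF d] by simp
  qed
  have "\<beta> * measure N E = (\<Sum>C\<in>?S. \<beta> * measure N C)"
    using m[OF fN sN] by (simp add: sum_distrib_left)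
  also have "\<dots> \<le> (\<Sum>C\<in>?S. \<alpha> * measure M C)"
    using h by (intro sum_mono) auto
  also have "\<dots> = \<alpha> * measure M E"
    using m[OF fM sM] by (simp add: sum_distrib_left)
  finally show ?thesis .
qed

lemma stop_ineq:
  fixes M N :: "(nat \<Rightarrow> bool) measure"
  assumes fM: "finite_measure M" and fN: "finite_measure N"
    and sM: "sets M = Ginf" and sN: "sets N = Ginf"
    and d: "\<And>t. dtm t (E t)" and dj: "disjoint_family E"
    and h: "\<And>t w. w \<in> E t \<Longrightarrow> \<beta> * measure N (cyl w t) \<le> \<alpha> * measure M (cyl w t)"
  shows "\<beta> * measure N (\<Union>t. E t) \<le> \<alpha> * measure M (\<Union>t. E t)"
proof -
  have r: "range E \<subseteq> Ginf" using d det_in by auto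
  have s1: "(\<lambda>i. \<beta> * measure N (E i)) sums (\<beta> * measure N (\<Union>t. E t))"
    using finite_measure.finite_measure_UNION[OF fN] r sN dj by (intro sums_mult) auto
  have s2: "(\<lambda>i. \<alpha> * measure M (E i)) sums (\<alpha> * measure M (\<Union>t. E t))"
    using finite_measure.finite_measure_UNION[OF fM] r sM dj by (intro sums_mult) auto
  have le: "\<And>i. \<beta> * measure N (E i) \<le> \<alpha> * measure M (E i)"
    using det_ineq[OF fM fN sM sN d h] by blast
  show ?thesis using sums_le[OF le s1 s2] .
qed


fun cnt :: "(nat \<Rightarrow> (nat\<Rightarrow>bool) \<Rightarrow> real) \<Rightarrow> (nat \<Rightarrow> (nat\<Rightarrow>bool) \<Rightarrow> real) \<Rightarrow> real \<Rightarrow> real \<Rightarrow> (nat\<Rightarrow>bool) \<Rightarrow> nat \<Rightarrow> nat" where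
  "cnt P Q a b w 0 = 0"
| "cnt P Q a b w (Suc t) = cnt P Q a b w t +
     (if (even (cnt P Q a b w t) \<and> P t w \<le> a * Q t w) \<or> (odd (cnt P Q a b w t) \<and> b * Q t w \<le> P t w) then 1 else 0)"

lemma cnt_mono: "s \<le> s' \<Longrightarrow> cnt P Q a b w s \<le> cnt P Q a b w s'"
  by (rule lift_Suc_mono_le[of "cnt P Q a b w"]) auto

lemma cnt_step: "cnt P Q a b w (Suc t) \<le> cnt P Q a b w t + 1"
  by simp

lemma cnt_det:
  assumes dP: "\<And>s v w. (\<forall>i<s. v i = w i) \<Longrightarrow> P s v = P s w"
    and dQ: "\<And>s v w. (\<forall>i<s. v i = w i) \<Longrightarrow> Q s v = Q s w"
    and a: "\<forall>i<t. v i = w i"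
  shows "s \<le> Suc t \<Longrightarrow> cnt P Q a b v s = cnt P Q a b w s"
proof (induction s)
  case 0 then show ?case by simp
next
  case (Suc s)
  then have "\<forall>i<s. v i = w i" using a by auto
  then have "P s v = P s w" "Q s v = Q s w" using dP dQ by auto
  with Suc show ?case by simp
qed

lemma cnt_first: "j \<le> cnt P Q a b w t \<Longrightarrow> 0 < j \<Longrightarrow> \<exists>t'. cnt P Q a b w t' < j \<and> j \<le> cnt P Q a b w (Suc t')"
proof (induction t)
  case 0 then show ?case by simp
next
  case (Suc t)
  show ?case
  proof (cases "j \<le> cnt P Q a b w t")
    case True then show ?thesis using Suc by blast
  next
    case False then show ?thesis using Suc.prems by (intro exI[of _ t]) auto
  qed
qed

lemma cnt_io:
  assumes lo: "\<forall>T. \<exists>t\<ge>T. P t w \<le> a * Q t w" and hi: "\<forall>T. \<exists>t\<ge>T. b * Q t w \<le> P t w"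
  shows "\<exists>t. j \<le> cnt P Q a b w t"
proof (induction j)
  case 0 then show ?case by simp
next
  case (Suc j)
  then obtain t0 where t0: "j \<le> cnt P Q a b w t0" by blast
  let ?c = "cnt P Q a b w"
  show ?case
  proof (cases "Suc j \<le> ?c t0")
    case True then show ?thesis by blast
  next
    case False
    then have cj: "?c t0 = j" using t0 by simp
    obtain t where t: "t \<ge> t0" "(even j \<and> P t w \<le> a * Q t w) \<or> (odd j \<and> b * Q t w \<le> P t w)"
      using lo hi by (cases "even j") blast+
    show ?thesis
    proof (cases "Suc j \<le> ?c t")
      case True then show ?thesis by blast
    next
      case False
      moreover have "j \<le> ?c t" using cnt_mono[OF t(1), of P Q a b w] cj by simp
      ultimately have "?c t = j" by simp
      then have "?c (Suc t) = Suc j" using t(2) by auto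
      then show ?thesis by (metis order_refl)
    qed
  qed
qed

lemma upcross_null:
  fixes M N :: "(nat \<Rightarrow> bool) measure"
  assumes pM: "prob_space M" and pN: "prob_space N"
    and sM: "sets M = Ginf" and sN: "sets N = Ginf" and spN: "space N = UNIV"
    and a0: "0 \<le> a" and ab: "a < b"
  shows "AE w in N. \<not> ((\<forall>T. \<exists>t\<ge>T. measure M (cyl w t) \<le> a * measure N (cyl w t)) \<and>
                        (\<forall>T. \<exists>t\<ge>T. b * measure N (cyl w t) \<le> measure M (cyl w t)))"
proof -
  define P where "P = (\<lambda>t w. measure M (cyl w t))"
  define Q where "Q = (\<lambda>t w. measure N (cyl w t))"
  define c where "c = cnt P Q a b"
  define E where "E j t = {w. c w t < j \<and> j \<le> c w (Suc t)}" for j t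
  define S where "S j = {w. \<exists>t. j \<le> c w t}" for j
  have fM: "finite_measure M" and fN: "finite_measure N"
    using pM pN by (auto simp: prob_space_def)
  have b0: "0 < b" using a0 ab by simp
  have dP: "P s v = P s w" if "\<forall>i<s. v i = w i" for s v w
    unfolding P_def using cyl_eq[OF that] by simp
  have dQ: "Q s v = Q s w" if "\<forall>i<s. v i = w i" for s v w
    unfolding Q_def using cyl_eq[OF that] by simp
  have cdet: "c v s = c w s" if "\<forall>i<t. v i = w i" "s \<le> Suc t" for v w s t
    unfolding c_def using cnt_det[of P Q, OF dP dQ that(1) that(2)] by blast
  have Edet: "dtm t (E j t)" for j t
    unfolding E_def by (rule det_Collect) (metis cdet le_SucI order_refl)
  have Edisj: "disjoint_family (E j)" for j
  proof -
    have *: "E j m \<inter> E j n = {}" if "m < n" for m n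
    proof -
      have le: "c w (Suc m) \<le> c w n" for w unfolding c_def using that by (intro cnt_mono) simp
      have "w \<notin> E j m \<inter> E j n" for w
      proof
        assume "w \<in> E j m \<inter> E j n"
        then have "j \<le> c w (Suc m)" "c w n < j" unfolding E_def by auto
        with le[of w] show False by linarith
      qed
      then show ?thesis by blast
    qed
    show ?thesis unfolding disjoint_family_on_def
      by (metis * Int_commute linorder_neqE_nat)
  qed
  have Seq: "S j = (\<Union>t. E j t)" if j0: "0 < j" for j
  proof
    show "S j \<subseteq> (\<Union>t. E j t)"
    proof
      fix w assume "w \<in> S j"
      then obtain t where "j \<le> c w t" unfolding S_def by blast
      then obtain t' where "c w t' < j \<and> j \<le> c w (Suc t')"
        using cnt_first[of j P Q a b w t] j0 unfolding c_def by blast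
      then show "w \<in> (\<Union>t. E j t)" unfolding E_def by blast
    qed
    show "(\<Union>t. E j t) \<subseteq> S j"
      unfolding S_def E_def by blast
  qed
  have Ssets: "S j \<in> Ginf" for j
  proof (cases "j = 0")
    case True
    then have "S j = UNIV" unfolding S_def by simp
    then show ?thesis using sets.top[of N] sN spN by simp
  next
    case False
    then have "S j = (\<Union>t. E j t)" using Seq by simp
    moreover have "range (E j) \<subseteq> Ginf" using Edet det_in by auto
    ultimately show ?thesis using sigma_algebra.countable_UN[OF ginf_sa] by auto
  qed
  have Santi: "S (Suc j) \<subseteq> S j" for j unfolding S_def using Suc_leD by blast
  have Einc: "c w (Suc t) = Suc (c w t)" "c w t = j" if "w \<in> E (Suc j) t" for w t j
  proof -
    have "c w (Suc t) \<le> c w t + 1" unfolding c_def by (rule cnt_step)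
    with that show "c w (Suc t) = Suc (c w t)" "c w t = j" unfolding E_def by auto
  qed
  have odd_b: "1 * measure M (S (Suc (2*i))) \<le> a * measure N (S (Suc (2*i)))" for i
  proof -
    have "1 * measure M (\<Union>t. E (Suc (2*i)) t) \<le> a * measure N (\<Union>t. E (Suc (2*i)) t)"
    proof (rule stop_ineq[OF fN fM sN sM Edet Edisj])
      fix t w assume w: "w \<in> E (Suc (2*i)) t"
      have "c w t = 2*i" "c w (Suc t) = Suc (c w t)" using Einc[OF w] by auto
      then have "P t w \<le> a * Q t w" unfolding c_def by (auto split: if_splits)
      then show "1 * measure M (cyl w t) \<le> a * measure N (cyl w t)" unfolding P_def Q_def by simp
    qed
    then show ?thesis using Seq[of "Suc (2*i)"] by simp
  qed
  have even_b: "b * measure N (S (Suc (Suc (2*i)))) \<le> 1 * measure M (S (Suc (Suc (2*i))))" for i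
  proof -
    have "b * measure N (\<Union>t. E (Suc (Suc (2*i))) t) \<le> 1 * measure M (\<Union>t. E (Suc (Suc (2*i))) t)"
    proof (rule stop_ineq[OF fM fN sM sN Edet Edisj])
      fix t w assume w: "w \<in> E (Suc (Suc (2*i))) t"
      have "c w t = Suc (2*i)" "c w (Suc t) = Suc (c w t)" using Einc[OF w] by auto
      then have "b * Q t w \<le> P t w" unfolding c_def by (auto split: if_splits)
      then show "b * measure N (cyl w t) \<le> 1 * measure M (cyl w t)" unfolding P_def Q_def by simp
    qed
    then show ?thesis using Seq[of "Suc (Suc (2*i))"] by simp
  qed
  have bound: "measure N (S (2*i)) \<le> (a/b)^i" for i
  proof (induction i)
    case 0 then show ?case using prob_space.prob_le_1[OF pN] by simp
  next
    case (Suc i)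
    have "b * measure N (S (2 * Suc i)) \<le> measure M (S (Suc (Suc (2*i))))"
      using even_b[of i] by simp
    also have "\<dots> \<le> measure M (S (Suc (2*i)))"
      using Santi Ssets sM by (intro finite_measure.finite_measure_mono[OF fM]) auto
    also have "\<dots> \<le> a * measure N (S (Suc (2*i)))" using odd_b[of i] by simp
    also have "\<dots> \<le> a * measure N (S (2*i))"
      using Santi Ssets sN a0 by (intro mult_left_mono finite_measure.finite_measure_mono[OF fN]) auto
    also have "\<dots> \<le> a * (a/b)^i" using Suc.IH a0 by (intro mult_left_mono) auto
    also have "a * (a/b)^i = b * (a/b)^(Suc i)" using b0 by simp
    finally have "b * measure N (S (2 * Suc i)) \<le> b * (a/b)^(Suc i)" .
    then show ?case using b0 by (simp only: mult_le_cancel_left_pos)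
  qed
  define I where "I = (\<Inter>j. S j)"
  have Isets: "I \<in> sets N" unfolding I_def sN
    using sigma_algebra.countable_INT[OF ginf_sa] Ssets by auto
  have Ile: "measure N I \<le> (a/b)^i" for i
  proof -
    have "measure N I \<le> measure N (S (2*i))"
      unfolding I_def using Ssets sN by (intro finite_measure.finite_measure_mono[OF fN]) auto
    then show ?thesis using bound[of i] by simp
  qed
  have lim: "(\<lambda>i. (a/b)^i) \<longlonglongrightarrow> 0"
    using a0 ab b0 by (intro LIMSEQ_realpow_zero) auto
  have I0: "measure N I = 0"
  proof (rule ccontr)
    assume "measure N I \<noteq> 0"
    then have "0 < measure N I" using measure_nonneg[of N I] by linarith
    then have "eventually (\<lambda>i. (a/b)^i < measure N I) sequentially"
      by (rule order_tendstoD(2)[OF lim])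
    then obtain i where "(a/b)^i < measure N I" by (metis eventually_sequentially order_refl)
    then show False using Ile[of i] by simp
  qed
  have Inull: "I \<in> null_sets N"
    using I0 Isets finite_measure.emeasure_eq_measure[OF fN] by (intro null_setsI) auto
  show ?thesis
  proof (rule AE_I'[OF Inull])
    show "{x \<in> space N. \<not> \<not> ((\<forall>T. \<exists>t\<ge>T. measure M (cyl x t) \<le> a * measure N (cyl x t)) \<and>
                        (\<forall>T. \<exists>t\<ge>T. b * measure N (cyl x t) \<le> measure M (cyl x t)))} \<subseteq> I"
    proof
      fix x assume "x \<in> {x \<in> space N. \<not> \<not> ((\<forall>T. \<exists>t\<ge>T. measure M (cyl x t) \<le> a * measure N (cyl x t)) \<and>
                        (\<forall>T. \<exists>t\<ge>T. b * measure N (cyl x t) \<le> measure M (cyl x t)))}"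
      then have lo: "\<forall>T. \<exists>t\<ge>T. P t x \<le> a * Q t x" and hi: "\<forall>T. \<exists>t\<ge>T. b * Q t x \<le> P t x"
        unfolding P_def Q_def by auto
      show "x \<in> I" unfolding I_def S_def c_def using cnt_io[of P x a Q b, OF lo hi] by blast
    qed
  qed
qed


definition Dfun :: "real \<Rightarrow> real \<Rightarrow> real" where
  "Dfun p q = (if p > 0 \<or> q > 0 then p / (p + q) else 1/2)"

lemma Dfun_le:
  assumes "0 \<le> p" "0 \<le> q" "0 \<le> a" "Dfun p q \<le> a / (1 + a)"
  shows "p \<le> a * q"
proof (cases "p > 0 \<or> q > 0")
  case True
  then have pq: "0 < p + q" using assms by auto
  from True assms have "p / (p + q) \<le> a / (1 + a)" by (simp add: Dfun_def)
  then have "p * (1 + a) \<le> a * (p + q)" using pq assms(3) by (simp add: divide_simps)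
  then show ?thesis by (simp add: algebra_simps)
next
  case False then show ?thesis using assms by auto
qed

lemma Dfun_ge:
  assumes "0 \<le> p" "0 \<le> q" "0 \<le> c" "c / (1 + c) \<le> Dfun p q"
  shows "c * q \<le> p"
proof (cases "p > 0 \<or> q > 0")
  case True
  then have pq: "0 < p + q" using assms by auto
  from True assms have "c / (1 + c) \<le> p / (p + q)" by (simp add: Dfun_def)
  then have "c * (p + q) \<le> p * (1 + c)" using pq assms(3) by (simp add: divide_simps)
  then show ?thesis by (simp add: algebra_simps)
next
  case False then show ?thesis using assms by auto
qed

lemma Dfun_range: "0 \<le> p \<Longrightarrow> 0 \<le> q \<Longrightarrow> 0 \<le> Dfun p q \<and> Dfun p q \<le> 1"
  by (auto simp: Dfun_def divide_simps)

lemma Dfun_swap: "0 \<le> p \<Longrightarrow> 0 \<le> q \<Longrightarrow> Dfun q p = 1 - Dfun p q"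
  by (auto simp: Dfun_def divide_simps)

lemma conv_crit:
  fixes D :: "nat \<Rightarrow> real"
  assumes r0: "\<And>t. 0 \<le> D t" and r1: "\<And>t. D t \<le> 1"
    and h: "\<And>\<alpha> \<beta>. \<alpha> \<in> \<rat> \<Longrightarrow> \<beta> \<in> \<rat> \<Longrightarrow> 0 < \<alpha> \<Longrightarrow> \<alpha> < \<beta> \<Longrightarrow> \<beta> < 1 \<Longrightarrow>
          \<not> ((\<forall>T. \<exists>t\<ge>T. D t \<le> \<alpha>) \<and> (\<forall>T. \<exists>t\<ge>T. \<beta> \<le> D t))"
  shows "convergent D"
proof -
  define X where "X t = ereal (D t)" for t
  define L where "L = Liminf sequentially X"
  define U where "U = Limsup sequentially X"
  have L0: "0 \<le> L" unfolding L_def X_def using r0 by (intro Liminf_bounded) auto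
  have U1: "U \<le> 1" unfolding U_def X_def using r1 by (intro Limsup_bounded) auto
  have LU: "L \<le> U" unfolding L_def U_def by (rule Liminf_le_Limsup) simp
  obtain l where l: "L = ereal l" using L0 LU U1 by (cases L) auto
  obtain u where u: "U = ereal u" using L0 LU U1 by (cases U) auto
  show ?thesis
  proof (cases "L = U")
    case True
    then have "X \<longlonglongrightarrow> L" unfolding L_def U_def
      by (subst tendsto_iff_Liminf_eq_Limsup) auto
    then have "D \<longlonglongrightarrow> l" unfolding X_def l by simp
    then show ?thesis by (auto simp: convergent_def)
  next
    case False
    then have lu: "l < u" using LU l u by simp
    obtain \<alpha> where a: "\<alpha> \<in> \<rat>" "l < \<alpha>" "\<alpha> < u" using Rats_dense_in_real[OF lu] by blast
    obtain \<beta> where b: "\<beta> \<in> \<rat>" "\<alpha> < \<beta>" "\<beta> < u" using Rats_dense_in_real[OF a(3)] by blast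
    have l0: "0 \<le> l" using L0 l by simp
    have u1: "u \<le> 1" using U1 u by simp
    have f1: "\<forall>T. \<exists>t\<ge>T. D t \<le> \<alpha>"
    proof (rule ccontr)
      assume "\<not> (\<forall>T. \<exists>t\<ge>T. D t \<le> \<alpha>)"
      then obtain T where "\<forall>t\<ge>T. \<alpha> < D t" by (meson not_le)
      then have "eventually (\<lambda>t. ereal \<alpha> \<le> X t) sequentially"
        unfolding X_def eventually_sequentially by (auto intro: less_imp_le)
      then have "ereal \<alpha> \<le> L" unfolding L_def by (rule Liminf_bounded)
      then show False using a(2) l by simp
    qed
    have f2: "\<forall>T. \<exists>t\<ge>T. \<beta> \<le> D t"
    proof (rule ccontr)
      assume "\<not> (\<forall>T. \<exists>t\<ge>T. \<beta> \<le> D t)"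
      then obtain T where "\<forall>t\<ge>T. D t < \<beta>" by (meson not_le)
      then have "eventually (\<lambda>t. X t \<le> ereal \<beta>) sequentially"
        unfolding X_def eventually_sequentially by (auto intro: less_imp_le)
      then have "U \<le> ereal \<beta>" unfolding U_def by (rule Limsup_bounded)
      then show False using b(3) u by simp
    qed
    have "\<not> ((\<forall>T. \<exists>t\<ge>T. D t \<le> \<alpha>) \<and> (\<forall>T. \<exists>t\<ge>T. \<beta> \<le> D t))"
      using h[OF a(1) b(1)] a b l0 u1 by auto
    then show ?thesis using f1 f2 by blast
  qed
qed

lemma AE_conv:
  fixes M N :: "(nat \<Rightarrow> bool) measure"
  assumes pM: "prob_space M" and pN: "prob_space N"
    and sM: "sets M = Ginf" and sN: "sets N = Ginf" and spN: "space N = UNIV"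
  shows "AE w in N. convergent (\<lambda>t. Dfun (measure M (cyl w t)) (measure N (cyl w t)))"
proof -
  define P where "P = (\<lambda>t w. measure M (cyl w t))"
  define Q where "Q = (\<lambda>t w. measure N (cyl w t))"
  have one: "AE w in N. 0 < real_of_rat r \<and> real_of_rat r < real_of_rat s \<and> real_of_rat s < 1 \<longrightarrow>
      \<not> ((\<forall>T. \<exists>t\<ge>T. Dfun (P t w) (Q t w) \<le> real_of_rat r) \<and> (\<forall>T. \<exists>t\<ge>T. real_of_rat s \<le> Dfun (P t w) (Q t w)))"
    for r s
  proof (cases "0 < real_of_rat r \<and> real_of_rat r < real_of_rat s \<and> real_of_rat s < 1")
    case False then show ?thesis by (intro AE_I2) blast
  next
    case True
    define \<alpha> where "\<alpha> = real_of_rat r"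
    define \<beta> where "\<beta> = real_of_rat s"
    define a where "a = \<alpha> / (1 - \<alpha>)"
    define b where "b = \<beta> / (1 - \<beta>)"
    have hh: "0 < \<alpha>" "\<alpha> < \<beta>" "\<beta> < 1" using True unfolding \<alpha>_def \<beta>_def by auto
    have ab: "0 \<le> a" "a < b" using hh unfolding a_def b_def
      by (auto simp: divide_simps algebra_simps)
    have ea: "a / (1 + a) = \<alpha>" and eb: "b / (1 + b) = \<beta>" using hh
      unfolding a_def b_def by (auto simp: divide_simps)
    have b0: "0 \<le> b" using ab by simp
    have "AE w in N. \<not> ((\<forall>T. \<exists>t\<ge>T. P t w \<le> a * Q t w) \<and> (\<forall>T. \<exists>t\<ge>T. b * Q t w \<le> P t w))"
      unfolding P_def Q_def by (rule upcross_null[OF pM pN sM sN spN ab])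
    then show ?thesis
    proof (rule eventually_mono)
      fix w assume nw: "\<not> ((\<forall>T. \<exists>t\<ge>T. P t w \<le> a * Q t w) \<and> (\<forall>T. \<exists>t\<ge>T. b * Q t w \<le> P t w))"
      have pq: "0 \<le> P t w" "0 \<le> Q t w" for t unfolding P_def Q_def by auto
      have i1: "P t w \<le> a * Q t w" if "Dfun (P t w) (Q t w) \<le> \<alpha>" for t
        using Dfun_le[OF pq ab(1)] that ea by simp
      have i2: "b * Q t w \<le> P t w" if "\<beta> \<le> Dfun (P t w) (Q t w)" for t
        using Dfun_ge[OF pq b0] that eb by simp
      show "0 < real_of_rat r \<and> real_of_rat r < real_of_rat s \<and> real_of_rat s < 1 \<longrightarrow>
      \<not> ((\<forall>T. \<exists>t\<ge>T. Dfun (P t w) (Q t w) \<le> real_of_rat r) \<and> (\<forall>T. \<exists>t\<ge>T. real_of_rat s \<le> Dfun (P t w) (Q t w)))"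
        using nw i1 i2 unfolding \<alpha>_def \<beta>_def by (meson order_trans)
    qed
  qed
  have "AE w in N. \<forall>r s. 0 < real_of_rat r \<and> real_of_rat r < real_of_rat s \<and> real_of_rat s < 1 \<longrightarrow>
      \<not> ((\<forall>T. \<exists>t\<ge>T. Dfun (P t w) (Q t w) \<le> real_of_rat r) \<and> (\<forall>T. \<exists>t\<ge>T. real_of_rat s \<le> Dfun (P t w) (Q t w)))"
    using one by (simp add: AE_all_countable)
  then show ?thesis
  proof (rule eventually_mono)
    fix w assume H: "\<forall>r s. 0 < real_of_rat r \<and> real_of_rat r < real_of_rat s \<and> real_of_rat s < 1 \<longrightarrow>
      \<not> ((\<forall>T. \<exists>t\<ge>T. Dfun (P t w) (Q t w) \<le> real_of_rat r) \<and> (\<forall>T. \<exists>t\<ge>T. real_of_rat s \<le> Dfun (P t w) (Q t w)))"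
    have pq: "0 \<le> P t w" "0 \<le> Q t w" for t unfolding P_def Q_def by auto
    have "convergent (\<lambda>t. Dfun (P t w) (Q t w))"
    proof (rule conv_crit)
      show "0 \<le> Dfun (P t w) (Q t w)" "Dfun (P t w) (Q t w) \<le> 1" for t using Dfun_range[OF pq] by auto
      fix \<alpha> \<beta> :: real assume ab: "\<alpha> \<in> \<rat>" "\<beta> \<in> \<rat>" "0 < \<alpha>" "\<alpha> < \<beta>" "\<beta> < 1"
      obtain r where r: "\<alpha> = real_of_rat r" using ab(1) by (auto elim!: Rats_cases)
      obtain s where s: "\<beta> = real_of_rat s" using ab(2) by (auto elim!: Rats_cases)
      have "0 < real_of_rat r \<and> real_of_rat r < real_of_rat s \<and> real_of_rat s < 1"
        using ab r s by blast
      from H[rule_format, OF this]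
      show "\<not> ((\<forall>T. \<exists>t\<ge>T. Dfun (P t w) (Q t w) \<le> \<alpha>) \<and> (\<forall>T. \<exists>t\<ge>T. \<beta> \<le> Dfun (P t w) (Q t w)))"
        unfolding r s .
    qed
    then show "convergent (\<lambda>t. Dfun (measure M (cyl w t)) (measure N (cyl w t)))"
      unfolding P_def Q_def .
  qed
qed

lemma det_fun_meas:
  fixes h :: "(nat \<Rightarrow> bool) \<Rightarrow> real"
  assumes h: "\<And>v w. (\<forall>i<t. v i = w i) \<Longrightarrow> h v = h w"
    and sK: "sets K = Ginf" and spK: "space K = UNIV"
  shows "h \<in> borel_measurable K"
proof (rule measurableI)
  fix A :: "real set" assume "A \<in> sets borel"
  have "dtm t {w. h w \<in> A}" by (rule det_Collect) (metis h)
  then show "h -` A \<inter> space K \<in> sets K" using sK spK det_in by (simp add: vimage_def)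
qed simp

lemma D_meas:
  assumes sK: "sets K = Ginf" and spK: "space K = UNIV"
  shows "(\<lambda>w. Dfun (measure M (cyl w t)) (measure N (cyl w t))) \<in> borel_measurable K"
  by (rule det_fun_meas[OF _ sK spK, of t]) (metis cyl_eq)

lemma R_meas:
  assumes sK: "sets K = Ginf" and spK: "space K = UNIV"
  shows "{w. \<exists>l. (\<lambda>t. Dfun (measure M (cyl w t)) (measure N (cyl w t))) \<longlonglongrightarrow> l \<and> l < e} \<in> Ginf"
proof -
  have m: "\<And>t. (\<lambda>w. Dfun (measure M (cyl w t)) (measure N (cyl w t))) \<in> borel_measurable K"
    by (rule D_meas[OF sK spK])
  have c1: "{w \<in> space K. Cauchy (\<lambda>t. Dfun (measure M (cyl w t)) (measure N (cyl w t)))} \<in> sets K"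
    by (rule sets_Collect_Cauchy[OF m])
  have lm: "(\<lambda>w. lim (\<lambda>t. Dfun (measure M (cyl w t)) (measure N (cyl w t)))) \<in> borel_measurable K"
    by (rule borel_measurable_lim_metric[OF m])
  have c2: "(\<lambda>w. lim (\<lambda>t. Dfun (measure M (cyl w t)) (measure N (cyl w t)))) -` {..<e} \<inter> space K \<in> sets K"
    by (rule measurable_sets[OF lm]) simp
  have "{w \<in> space K. Cauchy (\<lambda>t. Dfun (measure M (cyl w t)) (measure N (cyl w t))) \<and>
      lim (\<lambda>t. Dfun (measure M (cyl w t)) (measure N (cyl w t))) < e} =
      {w \<in> space K. Cauchy (\<lambda>t. Dfun (measure M (cyl w t)) (measure N (cyl w t)))} \<inter>
      ((\<lambda>w. lim (\<lambda>t. Dfun (measure M (cyl w t)) (measure N (cyl w t)))) -` {..<e} \<inter> space K)"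
    by auto
  then have "{w \<in> space K. Cauchy (\<lambda>t. Dfun (measure M (cyl w t)) (measure N (cyl w t))) \<and>
      lim (\<lambda>t. Dfun (measure M (cyl w t)) (measure N (cyl w t))) < e} \<in> sets K"
    using c1 c2 by auto
  moreover have "{w \<in> space K. Cauchy (\<lambda>t. Dfun (measure M (cyl w t)) (measure N (cyl w t))) \<and>
      lim (\<lambda>t. Dfun (measure M (cyl w t)) (measure N (cyl w t))) < e} =
     {w. \<exists>l. (\<lambda>t. Dfun (measure M (cyl w t)) (measure N (cyl w t))) \<longlonglongrightarrow> l \<and> l < e}"
    using spK by (auto simp: Cauchy_convergent_iff convergent_def limI)
  ultimately show ?thesis using sK by simp
qed


interpretation GI: sigma_algebra "UNIV :: (nat \<Rightarrow> bool) set" Ginf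
  by (rule ginf_sa)

definition sd :: "'a set \<Rightarrow> 'a set \<Rightarrow> 'a set" where
  "sd A E = (A - E) \<union> (E - A)"

lemma det_UN: "(\<And>i. i \<in> I \<Longrightarrow> dtm t (X i)) \<Longrightarrow> dtm t (\<Union>i\<in>I. X i)"
  unfolding dtm_def by blast

lemma det_empty: "dtm t {}"
  unfolding dtm_def by blast

lemma tail_small:
  fixes K :: "(nat \<Rightarrow> bool) measure" and A :: "nat \<Rightarrow> (nat \<Rightarrow> bool) set"
  assumes fK: "finite_measure K" and sK: "sets K = Ginf" and rA: "range A \<subseteq> Ginf" and e: "0 < e"
  shows "eventually (\<lambda>n. measure K ((\<Union>i. A i) - (\<Union>i<n. A i)) < e) sequentially"
proof -
  define U where "U n = (\<Union>i<n. A i)" for n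
  have Uin: "U n \<in> sets K" for n
    unfolding U_def sK using rA GI.finite_UN by auto
  have inc: "incseq U" unfolding U_def incseq_def by (auto intro: less_le_trans)
  have UU: "(\<Union>n. U n) = (\<Union>i. A i)" unfolding U_def by auto
  have Ain: "(\<Union>i. A i) \<in> sets K" unfolding sK using GI.countable_UN[OF rA] by simp
  have "(\<lambda>n. measure K (U n)) \<longlonglongrightarrow> measure K (\<Union>i. A i)"
    using finite_measure.finite_Lim_measure_incseq[OF fK, of U] Uin inc UU by auto
  then have "(\<lambda>n. measure K (\<Union>i. A i) - measure K (U n)) \<longlonglongrightarrow> measure K (\<Union>i. A i) - measure K (\<Union>i. A i)"
    by (intro tendsto_diff tendsto_const)
  then have "(\<lambda>n. measure K (\<Union>i. A i) - measure K (U n)) \<longlonglongrightarrow> 0" by simp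
  then have ev: "eventually (\<lambda>n. measure K (\<Union>i. A i) - measure K (U n) < e) sequentially"
    using e by (rule order_tendstoD(2))
  have "measure K ((\<Union>i. A i) - U n) = measure K (\<Union>i. A i) - measure K (U n)" for n
    using finite_measure.finite_measure_Diff[OF fK Ain Uin] unfolding U_def by auto
  then show ?thesis using ev unfolding U_def by simp
qed

lemma union_err:
  fixes K :: "(nat \<Rightarrow> bool) measure" and A EE :: "nat \<Rightarrow> (nat \<Rightarrow> bool) set" and n :: nat
  assumes fK: "finite_measure K" and sK: "sets K = Ginf" and rA: "range A \<subseteq> Ginf"
    and EE: "\<And>i. i < n \<Longrightarrow> EE i \<in> Ginf \<and> measure K (sd (A i) (EE i)) \<le> \<delta>"
  shows "measure K (sd (\<Union>i. A i) (\<Union>i<n. EE i)) \<le> measure K ((\<Union>i. A i) - (\<Union>i<n. A i)) + real n * \<delta>"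
proof -
  have Ain: "(\<Union>i. A i) \<in> Ginf" using GI.countable_UN[OF rA] by simp
  have A1: "(\<Union>i<n. A i) \<in> Ginf" using rA GI.finite_UN by auto
  have sdin: "sd (A i) (EE i) \<in> Ginf" if "i < n" for i
  proof -
    have "A i \<in> Ginf" "EE i \<in> Ginf" using rA EE[OF that] by auto
    then show ?thesis unfolding sd_def by (intro GI.Un GI.Diff)
  qed
  have sub: "sd (\<Union>i. A i) (\<Union>i<n. EE i) \<subseteq> ((\<Union>i. A i) - (\<Union>i<n. A i)) \<union> (\<Union>i<n. sd (A i) (EE i))"
    unfolding sd_def by blast
  have S2: "(\<Union>i<n. sd (A i) (EE i)) \<in> Ginf"
    using sdin GI.finite_UN by auto
  have S1: "(\<Union>i. A i) - (\<Union>i<n. A i) \<in> Ginf"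
    using Ain A1 GI.Diff by auto
  have "measure K (sd (\<Union>i. A i) (\<Union>i<n. EE i)) \<le> measure K (((\<Union>i. A i) - (\<Union>i<n. A i)) \<union> (\<Union>i<n. sd (A i) (EE i)))"
    using sub S1 S2 sK GI.Un
    by (intro finite_measure.finite_measure_mono[OF fK]) auto
  also have "\<dots> \<le> measure K ((\<Union>i. A i) - (\<Union>i<n. A i)) + measure K (\<Union>i<n. sd (A i) (EE i))"
    using S1 S2 sK by (intro measure_Un_le) auto
  also have "measure K (\<Union>i<n. sd (A i) (EE i)) \<le> (\<Sum>i<n. measure K (sd (A i) (EE i)))"
    using sdin sK by (intro finite_measure.finite_measure_subadditive_finite[OF fK]) auto
  also have "\<dots> \<le> of_nat (card {..<n}) * \<delta>"
    using EE by (intro sum_bounded_above) auto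
  finally show ?thesis by simp
qed

lemma approx:
  fixes M N :: "(nat \<Rightarrow> bool) measure"
  assumes fM: "finite_measure M" and fN: "finite_measure N"
    and sM: "sets M = Ginf" and sN: "sets N = Ginf" and A: "A \<in> Ginf"
  shows "\<forall>e>0. \<exists>t E. dtm t E \<and> measure M (sd A E) < e \<and> measure N (sd A E) < e"
proof -
  define G where "G = {E. \<exists>t. dtm t E}"
  have GG: "Ginf = sigma_sets UNIV G"
  proof
    show "Ginf \<subseteq> sigma_sets UNIV G"
      unfolding Ginf_def
    proof (rule sigma_sets_mono)
      show "{cyl w t |w t. True} \<subseteq> sigma_sets UNIV G"
      proof
        fix C assume "C \<in> {cyl w t |w t. True}"
        then obtain w t where C: "C = cyl w t" by blast
        have "dtm t (cyl w t)" unfolding dtm_def cyl_def by auto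
        then have "C \<in> G" unfolding G_def C by blast
        then show "C \<in> sigma_sets UNIV G" by (rule sigma_sets.Basic)
      qed
    qed
    show "sigma_sets UNIV G \<subseteq> Ginf"
      by (rule GI.sigma_sets_subset) (auto simp: G_def intro: det_in)
  qed
  have IS: "Int_stable G"
    unfolding Int_stable_def G_def
  proof (intro ballI)
    fix a b assume "a \<in> {E. \<exists>t. dtm t E}" "b \<in> {E. \<exists>t. dtm t E}"
    then obtain t s where "dtm t a" "dtm s b" by blast
    then have "dtm (t + s) (a \<inter> b)" using det_mono[of t a "t+s"] det_mono[of s b "t+s"] det_Int by simp
    then show "a \<inter> b \<in> {E. \<exists>t. dtm t E}" by blast
  qed
  from A have AG: "A \<in> sigma_sets UNIV G" using GG by simp
  have Gc: "G \<subseteq> Pow UNIV" by simp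
  from IS Gc AG show ?thesis
  proof (induction rule: sigma_sets_induct_disjoint)
    case (basic A)
    then obtain t where "dtm t A" unfolding G_def by blast
    moreover have "sd A A = {}" unfolding sd_def by simp
    ultimately show ?case by (metis measure_empty)
  next
    case empty
    have "sd {} {} = ({}::(nat\<Rightarrow>bool) set)" unfolding sd_def by simp
    then show ?case using det_empty by (metis measure_empty)
  next
    case (compl A)
    show ?case
    proof (intro allI impI)
      fix e :: real assume "0 < e"
      then obtain t E where "dtm t E" "measure M (sd A E) < e" "measure N (sd A E) < e"
        using compl.IH by blast
      moreover have "sd (UNIV - A) (UNIV - E) = sd A E" unfolding sd_def by blast
      ultimately show "\<exists>t E. dtm t E \<and> measure M (sd (UNIV - A) E) < e \<and> measure N (sd (UNIV - A) E) < e"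
        using det_Compl by metis
    qed
  next
    case (union A)
    have rA: "range A \<subseteq> Ginf" using union.hyps GG by simp
    show ?case
    proof (intro allI impI)
      fix e :: real assume e: "0 < e"
      have "eventually (\<lambda>n. measure M ((\<Union>i. A i) - (\<Union>i<n. A i)) < e/2 \<and>
            measure N ((\<Union>i. A i) - (\<Union>i<n. A i)) < e/2) sequentially"
        using tail_small[OF fM sM rA, of "e/2"] tail_small[OF fN sN rA, of "e/2"] e
        by (auto intro: eventually_conj)
      then obtain n0 where n0: "\<forall>m\<ge>n0. measure M ((\<Union>i. A i) - (\<Union>i<m. A i)) < e/2 \<and>
            measure N ((\<Union>i. A i) - (\<Union>i<m. A i)) < e/2"
        unfolding eventually_sequentially by blast
      define n where "n = n0"
      have n: "measure M ((\<Union>i. A i) - (\<Union>i<n. A i)) < e/2"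
          "measure N ((\<Union>i. A i) - (\<Union>i<n. A i)) < e/2"
        using n0 unfolding n_def by auto
      define \<delta> where "\<delta> = e / (2 * (real n + 1))"
      have d0: "0 < \<delta>" unfolding \<delta>_def using e by auto
      have nd: "real n * \<delta> < e / 2" unfolding \<delta>_def using e by (simp add: field_simps)
      have "\<forall>i. \<exists>p. dtm (fst p) (snd p) \<and> measure M (sd (A i) (snd p)) < \<delta> \<and> measure N (sd (A i) (snd p)) < \<delta>"
      proof
        fix i
        obtain t E where "dtm t E" "measure M (sd (A i) E) < \<delta>" "measure N (sd (A i) E) < \<delta>"
          using union.IH[of i] d0 by blast
        then show "\<exists>p. dtm (fst p) (snd p) \<and> measure M (sd (A i) (snd p)) < \<delta> \<and> measure N (sd (A i) (snd p)) < \<delta>"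
          by (intro exI[of _ "(t, E)"]) simp
      qed
      then obtain F where F: "\<And>i. dtm (fst (F i)) (snd (F i)) \<and> measure M (sd (A i) (snd (F i))) < \<delta>
            \<and> measure N (sd (A i) (snd (F i))) < \<delta>"
        by (metis choice)
      define T where "T = (\<Sum>i<n. fst (F i))"
      define E where "E = (\<Union>i<n. snd (F i))"
      have dE: "dtm T E" unfolding E_def
      proof (rule det_UN)
        fix i assume "i \<in> {..<n}"
        then have "fst (F i) \<le> T" unfolding T_def by (intro member_le_sum) auto
        then show "dtm T (snd (F i))" using F det_mono by blast
      qed
      have EE: "snd (F i) \<in> Ginf" for i using F det_in by blast
      have errM: "measure M (sd (\<Union>i. A i) E) \<le> measure M ((\<Union>i. A i) - (\<Union>i<n. A i)) + n * \<delta>"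
        unfolding E_def using F EE by (intro union_err[OF fM sM rA]) (auto intro: less_imp_le)
      have errN: "measure N (sd (\<Union>i. A i) E) \<le> measure N ((\<Union>i. A i) - (\<Union>i<n. A i)) + n * \<delta>"
        unfolding E_def using F EE by (intro union_err[OF fN sN rA]) (auto intro: less_imp_le)
      show "\<exists>t E. dtm t E \<and> measure M (sd (\<Union>i. A i) E) < e \<and> measure N (sd (\<Union>i. A i) E) < e"
        using dE errM errN n nd by (intro exI[of _ T] exI[of _ E]) auto
    qed
  qed
qed


lemma core:
  fixes M N :: "(nat \<Rightarrow> bool) measure"
  assumes pM: "prob_space M" and pN: "prob_space N"
    and sM: "sets M = Ginf" and sN: "sets N = Ginf" and spM: "space M = UNIV" and spN: "space N = UNIV"
    and A: "A \<in> Ginf" and c0: "0 < c" and NA: "0 < measure N A" and MA: "measure M A < c * measure N A"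
  shows "0 < measure N (A \<inter> {w. \<exists>l. (\<lambda>t. Dfun (measure M (cyl w t)) (measure N (cyl w t))) \<longlonglongrightarrow> l \<and> l < c/(1+c)})"
proof -
  define R where "R = {w. \<exists>l. (\<lambda>t. Dfun (measure M (cyl w t)) (measure N (cyl w t))) \<longlonglongrightarrow> l \<and> l < c/(1+c)}"
  define P where "P = (\<lambda>t w. measure M (cyl w t))"
  define Q where "Q = (\<lambda>t w. measure N (cyl w t))"
  have fM: "finite_measure M" and fN: "finite_measure N"
    using pM pN by (auto simp: prob_space_def)
  have pq: "0 \<le> P t w" "0 \<le> Q t w" for t w unfolding P_def Q_def by auto
  have Rin: "R \<in> Ginf" unfolding R_def by (rule R_meas[OF sN spN])
  have ARin: "A \<inter> R \<in> Ginf" using A Rin by auto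
  have main: "0 < measure N (A \<inter> R)"
  proof (rule ccontr)
    assume "\<not> 0 < measure N (A \<inter> R)"
    then have AR0: "measure N (A \<inter> R) = 0" using measure_nonneg[of N "A \<inter> R"] by linarith
    define r where "r = measure M A / measure N A"
    have r0: "0 \<le> r" unfolding r_def by auto
    have rc: "r < c" unfolding r_def using NA MA by (simp add: divide_simps mult.commute)
    define c' where "c' = (r + c) / 2"
    have c'0: "0 < c'" unfolding c'_def using r0 c0 by simp
    have c'c: "c' < c" unfolding c'_def using rc by simp
    have Mc': "measure M A < c' * measure N A"
    proof -
      have "measure M A = r * measure N A" unfolding r_def using NA by simp
      also have "\<dots> < c' * measure N A" using NA rc unfolding c'_def by (intro mult_strict_right_mono) auto
      finally show ?thesis .
    qed
    have ee: "c' / (1 + c') < c / (1 + c)" using c'0 c'c by (simp add: divide_simps algebra_simps)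
    define B where "B s = {w. \<forall>t\<ge>s. c' * Q t w \<le> P t w}" for s
    have Fdet: "dtm t {w. c' * Q t w \<le> P t w}" for t
      by (rule det_Collect) (metis P_def Q_def cyl_eq)
    have Bin: "B s \<in> Ginf" for s
    proof -
      have "B s = (\<Inter>t. {w. s \<le> t \<longrightarrow> c' * Q t w \<le> P t w})" unfolding B_def by auto
      moreover have "{w. s \<le> t \<longrightarrow> c' * Q t w \<le> P t w} \<in> Ginf" for t
        by (rule det_in[of t]) (rule det_Collect, metis P_def Q_def cyl_eq)
      ultimately show ?thesis using GI.countable_INT[of "\<lambda>t. {w. s \<le> t \<longrightarrow> c' * Q t w \<le> P t w}" UNIV] by auto
    qed
    have Bmono: "B s \<subseteq> B s'" if "s \<le> s'" for s s' unfolding B_def using that by auto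
    have key: "c' * measure N (A \<inter> B s) \<le> measure M A" for s
    proof -
      have detcase: "c' * measure N (E \<inter> B s) \<le> measure M E" if dE: "dtm m E" for m E
      proof -
        define t where "t = s + m"
        define F where "F = {w. c' * Q t w \<le> P t w}"
        have dEF: "dtm t (E \<inter> F)" unfolding F_def t_def
          using det_Int[OF det_mono[OF dE, of "s + m"] Fdet[of "s+m"]] by simp
        have EFin: "E \<inter> F \<in> Ginf" using det_in[OF dEF] .
        have Ein: "E \<in> Ginf" using det_in[OF dE] .
        have h1: "c' * measure N (E \<inter> F) \<le> 1 * measure M (E \<inter> F)"
          by (rule det_ineq[OF fM fN sM sN dEF]) (auto simp: F_def P_def Q_def)
        have h2: "measure N (E \<inter> B s) \<le> measure N (E \<inter> F)"
          using EFin sN unfolding B_def F_def t_def by (intro finite_measure.finite_measure_mono[OF fN]) auto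
        have h3: "measure M (E \<inter> F) \<le> measure M E"
          using Ein sM by (intro finite_measure.finite_measure_mono[OF fM]) auto
        have h4: "c' * measure N (E \<inter> B s) \<le> c' * measure N (E \<inter> F)"
          using h2 c'0 by (intro mult_left_mono) auto
        show ?thesis using h1 h3 h4 by linarith
      qed
      show ?thesis
      proof (rule field_le_epsilon)
        fix e :: real assume e: "0 < e"
        define \<epsilon> where "\<epsilon> = e / (1 + c')"
        have eps0: "0 < \<epsilon>" unfolding \<epsilon>_def using e c'0 by simp
        obtain t E where dE: "dtm t E" and eM: "measure M (sd A E) < \<epsilon>" and eN: "measure N (sd A E) < \<epsilon>"
          using approx[OF fM fN sM sN A] eps0 by blast
        have Ein: "E \<in> Ginf" using det_in[OF dE] .
        have sdin: "sd A E \<in> Ginf" unfolding sd_def using A Ein by auto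
        have "measure N (A \<inter> B s) \<le> measure N ((E \<inter> B s) \<union> sd A E)"
          using Ein Bin sdin sN unfolding sd_def by (intro finite_measure.finite_measure_mono[OF fN]) auto
        also have "\<dots> \<le> measure N (E \<inter> B s) + measure N (sd A E)"
          using Ein Bin sdin sN by (intro measure_Un_le) auto
        finally have n1: "measure N (A \<inter> B s) \<le> measure N (E \<inter> B s) + \<epsilon>" using eN by linarith
        have "measure M E \<le> measure M (A \<union> sd A E)"
          using A sdin sM unfolding sd_def by (intro finite_measure.finite_measure_mono[OF fM]) auto
        also have "\<dots> \<le> measure M A + measure M (sd A E)"
          using A sdin sM by (intro measure_Un_le) auto
        finally have m1: "measure M E \<le> measure M A + \<epsilon>" using eM by linarith
        have "c' * measure N (A \<inter> B s) \<le> c' * measure N (E \<inter> B s) + c' * \<epsilon>"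
          using n1 c'0 by (metis distrib_left mult_left_mono less_imp_le)
        also have "\<dots> \<le> measure M E + c' * \<epsilon>" using detcase[OF dE] by simp
        also have "\<dots> \<le> measure M A + (\<epsilon> + c' * \<epsilon>)" using m1 by simp
        also have "\<epsilon> + c' * \<epsilon> = e"
        proof -
          have "\<epsilon> + c' * \<epsilon> = (1 + c') * \<epsilon>" by (simp add: algebra_simps)
          also have "\<dots> = e" unfolding \<epsilon>_def using c'0 by simp
          finally show ?thesis .
        qed
        finally show "c' * measure N (A \<inter> B s) \<le> measure M A + e" by simp
      qed
    qed
    have ABin: "A \<inter> B s \<in> sets N" for s using A Bin sN by auto
    have inc: "incseq (\<lambda>s. A \<inter> B s)" unfolding incseq_def using Bmono by blast
    have "(\<lambda>s. measure N (A \<inter> B s)) \<longlonglongrightarrow> measure N (\<Union>s. A \<inter> B s)"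
      using ABin inc by (intro finite_measure.finite_Lim_measure_incseq[OF fN]) auto
    then have "(\<lambda>s. c' * measure N (A \<inter> B s)) \<longlonglongrightarrow> c' * measure N (\<Union>s. A \<inter> B s)"
      by (rule tendsto_mult_left)
    then have lim1: "c' * measure N (\<Union>s. A \<inter> B s) \<le> measure M A"
      using key by (intro LIMSEQ_le_const2) auto
    define Cc where "Cc = {w. \<not> convergent (\<lambda>t. Dfun (measure M (cyl w t)) (measure N (cyl w t)))}"
    have Ccin: "Cc \<in> Ginf"
    proof -
      have m: "\<And>t. (\<lambda>w. Dfun (measure M (cyl w t)) (measure N (cyl w t))) \<in> borel_measurable N"
        by (rule D_meas[OF sN spN])
      have "{w \<in> space N. Cauchy (\<lambda>t. Dfun (measure M (cyl w t)) (measure N (cyl w t)))} \<in> sets N"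
        by (rule sets_Collect_Cauchy[OF m])
      then have "space N - {w \<in> space N. Cauchy (\<lambda>t. Dfun (measure M (cyl w t)) (measure N (cyl w t)))} \<in> sets N"
        by auto
      moreover have "space N - {w \<in> space N. Cauchy (\<lambda>t. Dfun (measure M (cyl w t)) (measure N (cyl w t)))} = Cc"
        unfolding Cc_def using spN by (auto simp: Cauchy_convergent_iff)
      ultimately show ?thesis using sN by simp
    qed
    have "AE w in N. convergent (\<lambda>t. Dfun (measure M (cyl w t)) (measure N (cyl w t)))"
      by (rule AE_conv[OF pM pN sM sN spN])
    then have "emeasure N Cc = 0"
      using AE_iff_measurable[of Cc N] Ccin sN spN unfolding Cc_def by auto
    then have Cc0: "measure N Cc = 0" by (simp add: measure_def)
    have cover: "A - (\<Union>s. A \<inter> B s) \<subseteq> (A \<inter> R) \<union> Cc"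
    proof
      fix w assume w: "w \<in> A - (\<Union>s. A \<inter> B s)"
      show "w \<in> (A \<inter> R) \<union> Cc"
      proof (rule ccontr)
        assume "w \<notin> (A \<inter> R) \<union> Cc"
        then have nR: "w \<notin> R" and cv: "convergent (\<lambda>t. Dfun (P t w) (Q t w))"
          using w unfolding Cc_def P_def Q_def by auto
        then obtain l where l: "(\<lambda>t. Dfun (P t w) (Q t w)) \<longlonglongrightarrow> l" by (auto simp: convergent_def)
        then have "\<not> l < c/(1+c)" using nR unfolding R_def P_def Q_def by blast
        then have "c'/(1+c') < l" using ee by linarith
        then have "eventually (\<lambda>t. c'/(1+c') < Dfun (P t w) (Q t w)) sequentially"
          by (rule order_tendstoD(1)[OF l])
        then obtain s where s: "\<forall>t\<ge>s. c'/(1+c') < Dfun (P t w) (Q t w)"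
          unfolding eventually_sequentially by blast
        have "w \<in> B s" unfolding B_def
          using s Dfun_ge[OF pq _] c'0 by (auto intro: less_imp_le)
        then show False using w by blast
      qed
    qed
    have UB: "(\<Union>s. B s) \<in> Ginf" using GI.countable_UN[of B UNIV] Bin by auto
    have UBin: "(\<Union>s. A \<inter> B s) \<in> Ginf"
    proof -
      have "(\<Union>s. A \<inter> B s) = A \<inter> (\<Union>s. B s)" by auto
      then show ?thesis using A UB by auto
    qed
    have Dif: "A - (\<Union>s. A \<inter> B s) \<in> Ginf" using A UBin by auto
    have "measure N (A - (\<Union>s. A \<inter> B s)) \<le> measure N ((A \<inter> R) \<union> Cc)"
      using cover ARin Ccin sN by (intro finite_measure.finite_measure_mono[OF fN]) auto
    also have "\<dots> \<le> measure N (A \<inter> R) + measure N Cc"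
      using ARin Ccin sN by (intro measure_Un_le) auto
    finally have d0: "measure N (A - (\<Union>s. A \<inter> B s)) \<le> 0" using AR0 Cc0 by simp
    have eqA: "(\<Union>s. A \<inter> B s) \<union> (A - (\<Union>s. A \<inter> B s)) = A" by blast
    have "measure N A = measure N ((\<Union>s. A \<inter> B s) \<union> (A - (\<Union>s. A \<inter> B s)))"
      by (simp only: eqA)
    also have "\<dots> \<le> measure N (\<Union>s. A \<inter> B s) + measure N (A - (\<Union>s. A \<inter> B s))"
      using UBin Dif sN by (intro measure_Un_le) simp_all
    finally have "measure N A \<le> measure N (\<Union>s. A \<inter> B s)" using d0 by simp
    then have "c' * measure N A \<le> c' * measure N (\<Union>s. A \<inter> B s)" using c'0 by simp
    then show False using lim1 Mc' by simp
  qed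
  then show ?thesis unfolding R_def .
qed


lemma play_len: "length (play w f g t) = t"
  by (induction t) auto

lemma play_nth: "n < t \<Longrightarrow> play w f g t ! n = (w n, f (play w f g n), g (play w f g n))"
proof (induction t)
  case 0 then show ?case by simp
next
  case (Suc t)
  show ?case
  proof (cases "n < t")
    case True then show ?thesis using Suc by (simp add: nth_append play_len)
  next
    case False then have "n = t" using Suc.prems by simp
    then show ?thesis by (simp add: nth_append play_len)
  qed
qed

lemma fdt_Suc:
  "fdt (Suc s) (play w f g (Suc s)) =
     Dfun (\<Prod>n<s. pmf (f (play w f g n)) (w n)) (\<Prod>n<s. pmf (g (play w f g n)) (w n))"
proof -
  have a: "(\<Prod>n<s. pmf (fst (snd (play w f g (Suc s) ! n))) (fst (play w f g (Suc s) ! n)))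
      = (\<Prod>n<s. pmf (f (play w f g n)) (w n))"
    by (rule prod.cong) (auto simp: play_nth simp del: play.simps)
  have b: "(\<Prod>n<s. pmf (snd (snd (play w f g (Suc s) ! n))) (fst (play w f g (Suc s) ! n)))
      = (\<Prod>n<s. pmf (g (play w f g n)) (w n))"
    by (rule prod.cong) (auto simp: play_nth simp del: play.simps)
  show ?thesis unfolding fdt_def Dfun_def using a b by (simp add: Let_def)
qed

lemma lim_one_minus: "((\<lambda>t. 1 - X t) \<longlonglongrightarrow> l) \<longleftrightarrow> (X \<longlonglongrightarrow> 1 - (l::real))"
proof
  assume "(\<lambda>t. 1 - X t) \<longlonglongrightarrow> l"
  then have "(\<lambda>t. 1 - (1 - X t)) \<longlonglongrightarrow> 1 - l" by (intro tendsto_diff tendsto_const)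
  then show "X \<longlonglongrightarrow> 1 - l" by simp
next
  assume "X \<longlonglongrightarrow> 1 - l"
  then have "(\<lambda>t. 1 - X t) \<longlonglongrightarrow> 1 - (1 - l)" by (intro tendsto_diff tendsto_const)
  then show "(\<lambda>t. 1 - X t) \<longlonglongrightarrow> l" by simp
qed

theorem proposition3:
  shows "reasonable fdt"
  unfolding reasonable_def
proof (intro allI impI ballI)
  fix f g :: strat and Mf Mg :: "(nat \<Rightarrow> bool) measure" and A
  assume ind: "induced Mf f g f \<and> induced Mg f g g" and A: "A \<in> Ginf"
  have pM: "prob_space Mf" and spM: "space Mf = UNIV" and sM: "sets Mf = Ginf"
    and cM: "\<And>w t. measure Mf (cyl w t) = (\<Prod>n<t. pmf (f (play w f g n)) (w n))"
    using ind unfolding induced_def by auto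
  have pN: "prob_space Mg" and spN: "space Mg = UNIV" and sN: "sets Mg = Ginf"
    and cN: "\<And>w t. measure Mg (cyl w t) = (\<Prod>n<t. pmf (g (play w f g n)) (w n))"
    using ind unfolding induced_def by auto
  have feq: "fdt (Suc s) (play w f g (Suc s)) = Dfun (measure Mf (cyl w s)) (measure Mg (cyl w s))" for s w
    unfolding cM cN by (rule fdt_Suc)
  have limeq: "((\<lambda>t. fdt t (play w f g t)) \<longlonglongrightarrow> l) \<longleftrightarrow>
      ((\<lambda>t. Dfun (measure Mf (cyl w t)) (measure Mg (cyl w t))) \<longlonglongrightarrow> l)" for w l
    using filterlim_sequentially_Suc[of "\<lambda>t. fdt t (play w f g t)" "nhds l"] feq by simp
  have Req: "Rset fdt f g e = {w. \<exists>l. (\<lambda>t. Dfun (measure Mf (cyl w t)) (measure Mg (cyl w t))) \<longlonglongrightarrow> l \<and> l < e}" for e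
    unfolding Rset_def using limeq by auto
  have Leq: "Lset fdt f g e = {w. \<exists>l. (\<lambda>t. Dfun (measure Mg (cyl w t)) (measure Mf (cyl w t))) \<longlonglongrightarrow> l \<and> l < 1 - e}" for e
  proof -
    have sw: "Dfun (measure Mg (cyl w t)) (measure Mf (cyl w t)) = 1 - Dfun (measure Mf (cyl w t)) (measure Mg (cyl w t))" for w t
      by (rule Dfun_swap) auto
    have "(\<exists>l. (\<lambda>t. Dfun (measure Mf (cyl w t)) (measure Mg (cyl w t))) \<longlonglongrightarrow> l \<and> l > e) \<longleftrightarrow>
          (\<exists>l. (\<lambda>t. Dfun (measure Mg (cyl w t)) (measure Mf (cyl w t))) \<longlonglongrightarrow> l \<and> l < 1 - e)" for w
    proof
      assume "\<exists>l. (\<lambda>t. Dfun (measure Mf (cyl w t)) (measure Mg (cyl w t))) \<longlonglongrightarrow> l \<and> l > e"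
      then obtain l where l: "(\<lambda>t. Dfun (measure Mf (cyl w t)) (measure Mg (cyl w t))) \<longlonglongrightarrow> l" "l > e" by auto
      have "(\<lambda>t. 1 - Dfun (measure Mf (cyl w t)) (measure Mg (cyl w t))) \<longlonglongrightarrow> 1 - l"
        by (intro tendsto_diff tendsto_const l(1))
      then show "\<exists>l. (\<lambda>t. Dfun (measure Mg (cyl w t)) (measure Mf (cyl w t))) \<longlonglongrightarrow> l \<and> l < 1 - e"
        unfolding sw using l(2) by (intro exI[of _ "1 - l"]) auto
    next
      assume "\<exists>l. (\<lambda>t. Dfun (measure Mg (cyl w t)) (measure Mf (cyl w t))) \<longlonglongrightarrow> l \<and> l < 1 - e"
      then obtain l where l: "(\<lambda>t. 1 - Dfun (measure Mf (cyl w t)) (measure Mg (cyl w t))) \<longlonglongrightarrow> l" "l < 1 - e"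
        unfolding sw by auto
      have "(\<lambda>t. 1 - (1 - Dfun (measure Mf (cyl w t)) (measure Mg (cyl w t)))) \<longlonglongrightarrow> 1 - l"
        by (intro tendsto_diff tendsto_const l(1))
      then show "\<exists>l. (\<lambda>t. Dfun (measure Mf (cyl w t)) (measure Mg (cyl w t))) \<longlonglongrightarrow> l \<and> l > e"
        using l(2) by (intro exI[of _ "1 - l"]) auto
    qed
    then show ?thesis unfolding Lset_def using limeq by auto
  qed
  have r1: "\<forall>e. 0 < e \<and> e < 1 / 2 \<and> 0 < measure Mg A \<and> measure Mf A < e / (1 - e) * measure Mg A \<longrightarrow>
           0 < measure Mg (A \<inter> Rset fdt f g e)"
  proof (intro allI impI)
    fix e :: real assume h: "0 < e \<and> e < 1 / 2 \<and> 0 < measure Mg A \<and> measure Mf A < e / (1 - e) * measure Mg A"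
    define c where "c = e / (1 - e)"
    have c0: "0 < c" unfolding c_def using h by simp
    have ce: "c / (1 + c) = e" unfolding c_def using h by (simp add: divide_simps)
    have "0 < measure Mg (A \<inter> {w. \<exists>l. (\<lambda>t. Dfun (measure Mf (cyl w t)) (measure Mg (cyl w t))) \<longlonglongrightarrow> l \<and> l < c/(1+c)})"
      using h unfolding c_def by (intro core[OF pM pN sM sN spM spN A]) auto
    then show "0 < measure Mg (A \<inter> Rset fdt f g e)" unfolding Req ce .
  qed
  have r2: "\<forall>e. 1 / 2 < e \<and> e < 1 \<and> 0 < measure Mf A \<and> measure Mg A < (1 - e) / e * measure Mf A \<longrightarrow>
           0 < measure Mf (A \<inter> Lset fdt f g e)"
  proof (intro allI impI)
    fix e :: real assume h: "1 / 2 < e \<and> e < 1 \<and> 0 < measure Mf A \<and> measure Mg A < (1 - e) / e * measure Mf A"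
    define c where "c = (1 - e) / e"
    have c0: "0 < c" unfolding c_def using h by simp
    have ce: "c / (1 + c) = 1 - e" unfolding c_def using h by (simp add: divide_simps)
    have "0 < measure Mf (A \<inter> {w. \<exists>l. (\<lambda>t. Dfun (measure Mg (cyl w t)) (measure Mf (cyl w t))) \<longlonglongrightarrow> l \<and> l < c/(1+c)})"
      using h unfolding c_def by (intro core[OF pN pM sN sM spN spM A]) auto
    then show "0 < measure Mf (A \<inter> Lset fdt f g e)" unfolding Leq ce .
  qed
  show "(\<forall>e. 0 < e \<and> e < 1 / 2 \<and> 0 < measure Mg A \<and> measure Mf A < e / (1 - e) * measure Mg A \<longrightarrow>
           0 < measure Mg (A \<inter> Rset fdt f g e)) \<and>
    (\<forall>e. 1 / 2 < e \<and> e < 1 \<and> 0 < measure Mf A \<and> measure Mg A < (1 - e) / e * measure Mf A \<longrightarrow>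
           0 < measure Mf (A \<inter> Lset fdt f g e))"
    using r1 r2 by blast
qed

end
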